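(* Let $X$ be a Banach space such that every bounded linear operator $A:X\to X$ is of the form $A=\lambda I+S$ with $\lambda\in\mathbb{R}$ and $S$ strictly singular. Then $X$ is UALS-saturated.
   Context: $\mathcal{L}(X)$ is the space of bounded linear operators on $X$ with the operator norm. An operator is strictly singular if its restriction to no infinite-dimensional closed subspace is an isomorphism onto its image. Here "subspace" means closed infinite-dimensional subspace. $X$ is UALS-saturated if there exists $C>0$ such that for every convex (norm-)compact $W\subset\mathcal{L}(X)$, every $A\in\mathcal{L}(X)$ and $\varepsilon>0$ with the property that for every $x$ in the unit ball of $X$ there is $B\in W$ with $\|(A-B)x\|\le\varepsilon$, it holds that for every subspace $Y$ of $X$ there exist a further subspace $Z\subset Y$ and $B\in W$ with $\|(A-B)|_Z\|_{\mathcal{L}(Z,X)}\le C\varepsilon$. *)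

theory Defs
  imports "HOL-Analysis.Analysis"
begin

definition inf_dim :: "'a::real_vector set \<Rightarrow> bool" where
  "inf_dim Y \<longleftrightarrow> \<not> (\<exists>B. finite B \<and> Y \<subseteq> span B)"

text \<open>"Subspace" in the paper: closed infinite-dimensional linear subspace.\<close>
definition inf_subspace :: "'a::real_normed_vector set \<Rightarrow> bool" where
  "inf_subspace Y \<longleftrightarrow> subspace Y \<and> closed Y \<and> inf_dim Y"

definition iso_onto_image :: "('a::real_normed_vector \<Rightarrow>\<^sub>L 'b::real_normed_vector) \<Rightarrow> 'a set \<Rightarrow> bool" where
  "iso_onto_image T Y \<longleftrightarrow> inj_on (blinfun_apply T) Y \<and>
     (\<exists>K. \<forall>y\<in>Y. norm y \<le> K * norm (blinfun_apply T y))"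

definition strictly_singular :: "('a::real_normed_vector \<Rightarrow>\<^sub>L 'b::real_normed_vector) \<Rightarrow> bool" where
  "strictly_singular T \<longleftrightarrow> \<not> (\<exists>Y. inf_subspace Y \<and> iso_onto_image T Y)"

definition UALS_saturated :: "'a::banach itself \<Rightarrow> bool" where
  "UALS_saturated TYPE('a) \<longleftrightarrow>
    (\<exists>C>0. \<forall>(W :: ('a \<Rightarrow>\<^sub>L 'a) set) (A :: 'a \<Rightarrow>\<^sub>L 'a) (\<epsilon>::real).
       convex W \<and> compact W \<and> \<epsilon> > 0 \<and>
       (\<forall>x::'a. norm x \<le> 1 \<longrightarrow> (\<exists>B\<in>W. norm (blinfun_apply (A - B) x) \<le> \<epsilon>)) \<longrightarrow>
       (\<forall>Y. inf_subspace Y \<longrightarrow>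
          (\<exists>Z B. inf_subspace Z \<and> Z \<subseteq> Y \<and> B \<in> W \<and>
                 (\<forall>z\<in>Z. norm (blinfun_apply (A - B) z) \<le> C * \<epsilon> * norm z))))"

end

theory Submission
  imports Defs
begin


definition gok :: "real \<Rightarrow> ('a::real_normed_vector \<times> real) set \<Rightarrow> bool" where
  "gok K G \<longleftrightarrow> (0,0) \<in> G \<and> (\<forall>a r b s. (a,r) \<in> G \<longrightarrow> (b,s) \<in> G \<longrightarrow> (a+b, r+s) \<in> G) \<and>
     (\<forall>a r c. (a,r) \<in> G \<longrightarrow> (c *\<^sub>R a, c*r) \<in> G) \<and> (\<forall>a r. (a,r) \<in> G \<longrightarrow> r \<le> K * norm a)"

lemma gok_single:
  assumes "gok K G" "(a,r) \<in> G" "(a,s) \<in> G" shows "r = s"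
proof -
  have m: "(-1 *\<^sub>R a, -1 * s) \<in> G" using assms unfolding gok_def by blast
  have "(a + -1 *\<^sub>R a, r + -1 * s) \<in> G" using assms(1,2) m unfolding gok_def by blast
  hence "r - s \<le> 0" using assms(1) unfolding gok_def by fastforce
  have m2: "(-1 *\<^sub>R a, -1 * r) \<in> G" using assms unfolding gok_def by blast
  have "(a + -1 *\<^sub>R a, s + -1 * r) \<in> G" using assms(1,3) m2 unfolding gok_def by blast
  hence "s - r \<le> 0" using assms(1) unfolding gok_def by fastforce
  with \<open>r - s \<le> 0\<close> show ?thesis by simp
qed

lemma gok_extend:
  assumes g: "gok K G" and K: "K \<ge> 0" and u: "\<forall>r. (u,r) \<notin> G"
  shows "\<exists>G'. gok K G' \<and> G \<subseteq> G' \<and> (\<exists>r. (u,r) \<in> G')"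
proof -
  define L where "L = (\<lambda>(b,s). s - K * norm (b - u)) ` G"
  have L0: "L \<noteq> {}" using g unfolding L_def gok_def by auto
  have key: "s - K * norm (b - u) \<le> K * norm (a + u) - r" if "(a,r) \<in> G" "(b,s) \<in> G" for a r b s
  proof -
    have "(a+b, r+s) \<in> G" using g that unfolding gok_def by blast
    hence "r + s \<le> K * norm (a+b)" using g unfolding gok_def by blast
    also have "norm (a+b) \<le> norm (a+u) + norm (b-u)"
      using norm_triangle_ineq[of "a+u" "b-u"] by simp
    hence "K * norm (a+b) \<le> K * norm (a+u) + K * norm (b - u)"
      using K by (metis distrib_left mult_left_mono)
    finally show ?thesis by simp
  qed
  have Lb: "bdd_above L" unfolding bdd_above_def
  proof (intro exI[of _ "K * norm u"] ballI)
    fix x assume "x \<in> L"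
    then obtain b s where bs: "(b,s) \<in> G" "x = s - K * norm (b - u)" unfolding L_def by auto
    have "(0,0) \<in> G" using g unfolding gok_def by blast
    from key[OF this bs(1)] bs(2) show "x \<le> K * norm u" by simp
  qed
  define c where "c = Sup L"
  have c1: "s - K * norm (b - u) \<le> c" if "(b,s) \<in> G" for b s
    unfolding c_def using Lb that by (intro cSup_upper) (auto simp: L_def)
  have c2: "c \<le> K * norm (a + u) - r" if "(a,r) \<in> G" for a r
    unfolding c_def using L0 key[OF that] by (intro cSup_least) (auto simp: L_def)
  have dom: "r + t * c \<le> K * norm (a + t *\<^sub>R u)" if "(a,r) \<in> G" for a r t
  proof (cases "t = 0")
    case True then show ?thesis using g that unfolding gok_def by auto
  next
    case False
    show ?thesis
    proof (cases "t > 0")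
      case True
      have "((1/t) *\<^sub>R a, (1/t) * r) \<in> G" using g that unfolding gok_def by blast
      from c2[OF this] have "t * c \<le> t * (K * norm ((1/t) *\<^sub>R a + u) - (1/t) * r)"
        using True by (intro mult_left_mono) auto
      also have "norm ((1/t) *\<^sub>R a + u) = norm ((1/t) *\<^sub>R (a + t *\<^sub>R u))"
        using True by (simp add: scaleR_right_distrib)
      also have "\<dots> = (1/t) * norm (a + t *\<^sub>R u)" using True by simp
      finally show ?thesis using True by (simp add: algebra_simps)
    next
      case False
      hence tn: "t < 0" using \<open>t \<noteq> 0\<close> by simp
      define s where "s = -t"
      have sp: "s > 0" using tn s_def by simp
      have "((1/s) *\<^sub>R a, (1/s) * r) \<in> G" using g that unfolding gok_def by blast
      from c1[OF this] have "s * ((1/s) * r - K * norm ((1/s) *\<^sub>R a - u)) \<le> s * c"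
        using sp by (intro mult_left_mono) auto
      also have "norm ((1/s) *\<^sub>R a - u) = norm ((1/s) *\<^sub>R (a - s *\<^sub>R u))"
        using sp by (simp add: scaleR_diff_right)
      also have "\<dots> = (1/s) * norm (a - s *\<^sub>R u)" using sp by simp
      finally have "r - K * norm (a - s *\<^sub>R u) \<le> s * c" using sp by (simp add: algebra_simps)
      then show ?thesis unfolding s_def by (simp add: algebra_simps)
    qed
  qed
  define G' where "G' = (\<lambda>((a,r),t). (a + t *\<^sub>R u, r + t * c)) ` (G \<times> UNIV)"
  have mem: "(a + t *\<^sub>R u, r + t * c) \<in> G'" if "(a,r) \<in> G" for a r t
    unfolding G'_def using that by (auto intro!: image_eqI[where x="((a,r),t)"])
  have memE: "\<exists>a r t. (a,r) \<in> G \<and> x = a + t *\<^sub>R u \<and> y = r + t * c" if "(x,y) \<in> G'" for x y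
    using that unfolding G'_def by auto
  have "gok K G'"
    unfolding gok_def
  proof (intro conjI allI impI)
    show "(0,0) \<in> G'" using mem[of 0 0 0] g unfolding gok_def by auto
  next
    fix a r b s assume "(a,r) \<in> G'" "(b,s) \<in> G'"
    then obtain a1 r1 t1 a2 r2 t2 where h: "(a1,r1) \<in> G" "a = a1 + t1 *\<^sub>R u" "r = r1 + t1 * c"
      "(a2,r2) \<in> G" "b = a2 + t2 *\<^sub>R u" "s = r2 + t2 * c" using memE by metis
    have "(a1+a2, r1+r2) \<in> G" using g h unfolding gok_def by blast
    from mem[OF this, of "t1+t2"] show "(a+b, r+s) \<in> G'" using h
      by (simp add: algebra_simps scaleR_add_left)
  next
    fix a r c' assume "(a,r) \<in> G'"
    then obtain a1 r1 t1 where h: "(a1,r1) \<in> G" "a = a1 + t1 *\<^sub>R u" "r = r1 + t1 * c" using memE by metis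
    have "(c' *\<^sub>R a1, c'*r1) \<in> G" using g h unfolding gok_def by blast
    from mem[OF this, of "c'*t1"] show "(c' *\<^sub>R a, c'*r) \<in> G'" using h
      by (simp add: algebra_simps scaleR_add_right)
  next
    fix a r assume "(a,r) \<in> G'"
    then obtain a1 r1 t1 where h: "(a1,r1) \<in> G" "a = a1 + t1 *\<^sub>R u" "r = r1 + t1 * c" using memE by metis
    show "r \<le> K * norm a" using dom[OF h(1)] h by simp
  qed
  moreover have "G \<subseteq> G'" using mem[of _ _ 0] by auto
  moreover have "(u, c) \<in> G'" using mem[of 0 0 1] g unfolding gok_def by auto
  ultimately show ?thesis by blast
qed

lemma hahn_banach_graph:
  fixes G0 :: "('a::real_normed_vector \<times> real) set"
  assumes g0: "gok K G0" and K: "K \<ge> 0"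
  shows "\<exists>f. linear f \<and> (\<forall>u. \<bar>f u\<bar> \<le> K * norm u) \<and> (\<forall>a r. (a,r) \<in> G0 \<longrightarrow> f a = r)"
proof -
  define A where "A = {G. gok K G \<and> G0 \<subseteq> G}"
  have "\<forall>C\<in>chains A. \<exists>U\<in>A. \<forall>X\<in>C. X \<subseteq> U"
  proof
    fix C assume C: "C \<in> chains A"
    show "\<exists>U\<in>A. \<forall>X\<in>C. X \<subseteq> U"
    proof (cases "C = {}")
      case True then show ?thesis using g0 unfolding A_def by auto
    next
      case False
      have CA: "C \<subseteq> A" using C chainsD2 by blast
      have two: "\<exists>X\<in>C. p \<in> X \<and> q \<in> X" if pq: "p \<in> \<Union>C" "q \<in> \<Union>C" for p q
      proof -
        obtain X1 X2 where "X1 \<in> C" "X2 \<in> C" "p \<in> X1" "q \<in> X2" using pq by blast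
        then show ?thesis using chainsD[OF C, of X1 X2] by blast
      qed
      have "gok K (\<Union>C)"
        unfolding gok_def
      proof (intro conjI allI impI)
        obtain X where "X \<in> C" using False by blast
        then show "(0,0) \<in> \<Union>C" using CA unfolding A_def gok_def by blast
      next
        fix a r b s assume "(a,r) \<in> \<Union>C" "(b,s) \<in> \<Union>C"
        then obtain X where "X \<in> C" "(a,r) \<in> X" "(b,s) \<in> X" using two by blast
        then show "(a+b,r+s) \<in> \<Union>C" using CA unfolding A_def gok_def by blast
      next
        fix a r c assume "(a,r) \<in> \<Union>C"
        then obtain X where "X \<in> C" "(a,r) \<in> X" by blast
        then show "(c *\<^sub>R a, c*r) \<in> \<Union>C" using CA unfolding A_def gok_def by blast
      next
        fix a r assume "(a,r) \<in> \<Union>C"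
        then obtain X where "X \<in> C" "(a,r) \<in> X" by blast
        then show "r \<le> K * norm a" using CA unfolding A_def gok_def by blast
      qed
      moreover have "G0 \<subseteq> \<Union>C" using False CA unfolding A_def by blast
      ultimately show ?thesis unfolding A_def by blast
    qed
  qed
  from Zorn_Lemma2[OF this] obtain M where M: "M \<in> A" and max: "\<forall>X\<in>A. M \<subseteq> X \<longrightarrow> X = M" by blast
  have gM: "gok K M" and M0: "G0 \<subseteq> M" using M unfolding A_def by auto
  have full: "\<exists>r. (u,r) \<in> M" for u
  proof (rule ccontr)
    assume nu: "\<not> (\<exists>r. (u,r) \<in> M)"
    then obtain G' where "gok K G'" "M \<subseteq> G'" "\<exists>r. (u,r) \<in> G'" using gok_extend[OF gM K] by blast
    moreover have "G' \<in> A" using calculation M0 unfolding A_def by auto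
    ultimately show False using max nu by blast
  qed
  define f where "f u = (SOME r. (u,r) \<in> M)" for u
  have fM: "(u, f u) \<in> M" for u unfolding f_def using full someI_ex by metis
  have fe: "f u = r" if "(u,r) \<in> M" for u r using gok_single[OF gM fM that] .
  have "linear f"
  proof (rule linearI)
    fix b1 b2 show "f (b1 + b2) = f b1 + f b2"
      using gM fM fe unfolding gok_def by blast
  next
    fix r b show "f (r *\<^sub>R b) = r *\<^sub>R f b"
      using gM fM fe unfolding gok_def by simp
  qed
  moreover have "\<bar>f u\<bar> \<le> K * norm u" for u
  proof -
    have "f u \<le> K * norm u" using gM fM unfolding gok_def by blast
    moreover have "f (-u) \<le> K * norm (-u)" using gM fM unfolding gok_def by blast
    moreover have "f (-u) = - f u" using \<open>linear f\<close> by (simp add: linear_neg)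
    ultimately show ?thesis by simp
  qed
  ultimately show ?thesis using fe M0 by blast
qed



lemma hb_dist:
  fixes V :: "'a::real_normed_vector set"
  assumes V: "subspace V" and d: "d > 0" and dist: "\<forall>v\<in>V. d \<le> norm (x - v)"
  shows "\<exists>f. linear f \<and> (\<forall>u. \<bar>f u\<bar> \<le> (1/d) * norm u) \<and> f x = 1 \<and> (\<forall>v\<in>V. f v = 0)"
proof -
  define G0 where "G0 = (\<lambda>(v,t). (v + t *\<^sub>R x, t)) ` (V \<times> UNIV)"
  have mem: "(v + t *\<^sub>R x, t) \<in> G0" if "v \<in> V" for v t
    unfolding G0_def using that by (auto intro!: image_eqI[where x="(v,t)"])
  have memE: "\<exists>v t. v \<in> V \<and> a = v + t *\<^sub>R x \<and> r = t" if "(a,r) \<in> G0" for a r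
    using that unfolding G0_def by auto
  have dom: "t \<le> (1/d) * norm (v + t *\<^sub>R x)" if "v \<in> V" for v t
  proof (cases "t = 0")
    case True then show ?thesis using d by simp
  next
    case False
    have "- ((1/t) *\<^sub>R v) \<in> V" using V that by (simp add: subspace_neg subspace_scale)
    hence "d \<le> norm (x - - ((1/t) *\<^sub>R v))" using dist by blast
    also have "x - - ((1/t) *\<^sub>R v) = (1/t) *\<^sub>R (v + t *\<^sub>R x)" using False
      by (simp add: scaleR_add_right)
    also have "norm \<dots> = norm (v + t *\<^sub>R x) / \<bar>t\<bar>" by simp
    finally have "d * \<bar>t\<bar> \<le> norm (v + t *\<^sub>R x)" using False by (simp add: field_simps)
    hence "t * d \<le> norm (v + t *\<^sub>R x)" by (smt (verit) d mult_left_mono abs_ge_self mult.commute)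
    then show ?thesis using d by (simp add: field_simps)
  qed
  have "gok (1/d) G0" unfolding gok_def
  proof (intro conjI allI impI)
    show "(0,0) \<in> G0" using mem[of 0 0] V by (simp add: subspace_0)
  next
    fix a r b s assume "(a,r) \<in> G0" "(b,s) \<in> G0"
    then obtain v1 t1 v2 t2 where h: "v1 \<in> V" "a = v1 + t1 *\<^sub>R x" "r = t1" "v2 \<in> V" "b = v2 + t2 *\<^sub>R x" "s = t2"
      using memE by metis
    from mem[of "v1+v2" "t1+t2"] show "(a+b,r+s) \<in> G0" using h V
      by (simp add: subspace_add algebra_simps scaleR_add_left)
  next
    fix a r c assume "(a,r) \<in> G0"
    then obtain v1 t1 where h: "v1 \<in> V" "a = v1 + t1 *\<^sub>R x" "r = t1" using memE by metis
    from mem[of "c *\<^sub>R v1" "c*t1"] show "(c *\<^sub>R a, c*r) \<in> G0" using h V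
      by (simp add: subspace_scale scaleR_add_right)
  next
    fix a r assume "(a,r) \<in> G0"
    then obtain v1 t1 where h: "v1 \<in> V" "a = v1 + t1 *\<^sub>R x" "r = t1" using memE by metis
    show "r \<le> (1/d) * norm a" using dom[OF h(1)] h by simp
  qed
  from hahn_banach_graph[OF this] d obtain f where
    f: "linear f" "\<forall>u. \<bar>f u\<bar> \<le> (1/d) * norm u" "\<forall>a r. (a,r) \<in> G0 \<longrightarrow> f a = r" by auto
  have "f x = 1" using f(3) mem[of 0 1] V by (simp add: subspace_0)
  moreover have "\<forall>v\<in>V. f v = 0" using f(3) mem[of _ 0] by auto
  ultimately show ?thesis using f by blast
qed

lemma bounded_fun_closed_kernel:
  fixes f :: "'a::real_normed_vector \<Rightarrow> real"
  assumes "linear f" "\<forall>u. \<bar>f u\<bar> \<le> K * norm u"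
  shows "closed {u. f u = 0}" and "bounded_linear f"
proof -
  show bl: "bounded_linear f"
    using assms by (intro bounded_linear_intro[of f K]) (auto simp: linear_add linear_scale mult.commute)
  show "closed {u. f u = 0}"
    by (intro closed_Collect_eq continuous_on_const bounded_linear.continuous_on[OF bl continuous_on_id])
qed

lemma inf_dim_kernel:
  fixes Y :: "'a::real_normed_vector set"
  assumes Y: "subspace Y" "inf_dim Y" and f: "linear (f :: 'a \<Rightarrow> real)"
  shows "inf_dim (Y \<inter> {u. f u = 0})"
  unfolding inf_dim_def
proof
  assume "\<exists>B. finite B \<and> Y \<inter> {u. f u = 0} \<subseteq> span B"
  then obtain B where B: "finite B" "Y \<inter> {u. f u = 0} \<subseteq> span B" by blast
  show False
  proof (cases "\<forall>y\<in>Y. f y = 0")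
    case True then show False using B Y(2) unfolding inf_dim_def by blast
  next
    case False
    then obtain y0 where y0: "y0 \<in> Y" "f y0 \<noteq> 0" by blast
    have "Y \<subseteq> span (insert y0 B)"
    proof
      fix y assume y: "y \<in> Y"
      define w where "w = y - (f y / f y0) *\<^sub>R y0"
      have "w \<in> Y" using Y(1) y y0 unfolding w_def by (simp add: subspace_diff subspace_scale)
      moreover have "f w = 0" using f y0 unfolding w_def by (simp add: linear_diff linear_scale)
      ultimately have "w \<in> span B" using B by blast
      hence "w \<in> span (insert y0 B)" by (meson span_mono subset_insertI subsetD)
      moreover have "(f y / f y0) *\<^sub>R y0 \<in> span (insert y0 B)" by (simp add: span_base span_scale)
      ultimately have "w + (f y / f y0) *\<^sub>R y0 \<in> span (insert y0 B)" by (rule span_add)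
      then show "y \<in> span (insert y0 B)" unfolding w_def by simp
    qed
    then show False using Y(2) B(1) unfolding inf_dim_def by blast
  qed
qed

lemma inf_subspace_kernels:
  fixes Y :: "'a::real_normed_vector set"
  assumes Y: "inf_subspace Y"
    and \<psi>: "\<forall>j<(k::nat). linear (\<psi> j) \<and> (\<forall>u. \<bar>\<psi> j u\<bar> \<le> M j * norm u)"
  shows "inf_subspace (Y \<inter> {u. \<forall>j<k. \<psi> j u = 0})"
  using \<psi>
proof (induction k)
  case 0 then show ?case using Y by simp
next
  case (Suc k)
  have IH: "inf_subspace (Y \<inter> {u. \<forall>j<k. \<psi> j u = 0})" using Suc by auto
  have eq: "Y \<inter> {u. \<forall>j<Suc k. \<psi> j u = 0} = (Y \<inter> {u. \<forall>j<k. \<psi> j u = 0}) \<inter> {u. \<psi> k u = 0}"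
    by (auto simp: less_Suc_eq)
  have lk: "linear (\<psi> k)" "\<forall>u. \<bar>\<psi> k u\<bar> \<le> M k * norm u" using Suc.prems by auto
  show ?case unfolding eq inf_subspace_def
  proof (intro conjI)
    show "subspace (Y \<inter> {u. \<forall>j<k. \<psi> j u = 0} \<inter> {u. \<psi> k u = 0})"
      using IH unfolding inf_subspace_def by (intro subspace_inter[OF _ linear_subspace_kernel[OF lk(1)]]) auto
    show "closed (Y \<inter> {u. \<forall>j<k. \<psi> j u = 0} \<inter> {u. \<psi> k u = 0})"
      using IH bounded_fun_closed_kernel(1)[OF lk] unfolding inf_subspace_def by (intro closed_Int[of "Y \<inter> {u. \<forall>j<k. \<psi> j u = 0}"]) auto
    show "inf_dim (Y \<inter> {u. \<forall>j<k. \<psi> j u = 0} \<inter> {u. \<psi> k u = 0})"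
      using IH lk(1) unfolding inf_subspace_def by (intro inf_dim_kernel) auto
  qed
qed

lemma rep_span:
  fixes x :: "nat \<Rightarrow> 'a::real_vector"
  assumes lin: "\<forall>j<N. linear (\<psi> j)"
    and bi: "\<forall>i<N. \<forall>j<N. \<psi> j (x i) = (if i = j then 1 else 0)"
    and v: "v \<in> span (x ` {..<N})"
  shows "v = (\<Sum>j<N. \<psi> j v *\<^sub>R x j)"
proof (rule span_induct[OF v, of "\<lambda>v. v = (\<Sum>j<N. \<psi> j v *\<^sub>R x j)"])
  show "subspace {v. v = (\<Sum>j<N. \<psi> j v *\<^sub>R x j)}" unfolding subspace_def
  proof (intro conjI allI impI ballI)
    show "0 \<in> Collect (\<lambda>v. v = (\<Sum>j<N. \<psi> j v *\<^sub>R x j))" using lin by (simp add: linear_0)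
  next
    fix a b assume "a \<in> Collect (\<lambda>v. v = (\<Sum>j<N. \<psi> j v *\<^sub>R x j))" "b \<in> Collect (\<lambda>v. v = (\<Sum>j<N. \<psi> j v *\<^sub>R x j))"
    then have ab: "a = (\<Sum>j<N. \<psi> j a *\<^sub>R x j)" "b = (\<Sum>j<N. \<psi> j b *\<^sub>R x j)" by auto
    have "(\<Sum>j<N. \<psi> j (a+b) *\<^sub>R x j) = (\<Sum>j<N. \<psi> j a *\<^sub>R x j + \<psi> j b *\<^sub>R x j)"
      using lin by (intro sum.cong) (auto simp: linear_add scaleR_add_left)
    also have "\<dots> = a + b" using ab by (simp add: sum.distrib)
    finally show "a + b \<in> Collect (\<lambda>v. v = (\<Sum>j<N. \<psi> j v *\<^sub>R x j))" by simp
  next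
    fix c a assume "a \<in> Collect (\<lambda>v. v = (\<Sum>j<N. \<psi> j v *\<^sub>R x j))"
    then have ab: "a = (\<Sum>j<N. \<psi> j a *\<^sub>R x j)" by auto
    have "(\<Sum>j<N. \<psi> j (c *\<^sub>R a) *\<^sub>R x j) = c *\<^sub>R (\<Sum>j<N. \<psi> j a *\<^sub>R x j)"
      using lin by (auto simp: linear_scale scaleR_sum_right intro!: sum.cong)
    then show "c *\<^sub>R a \<in> Collect (\<lambda>v. v = (\<Sum>j<N. \<psi> j v *\<^sub>R x j))" using ab by simp
  qed
next
  fix v assume "v \<in> x ` {..<N}"
  then obtain i where i: "i < N" "v = x i" by auto
  have "(\<Sum>j<N. \<psi> j v *\<^sub>R x j) = (\<Sum>j<N. (if j = i then x i else 0))"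
    using bi i by (intro sum.cong) auto
  also have "\<dots> = x i" using i by (simp add: sum.delta)
  finally show "v = (\<Sum>j<N. \<psi> j v *\<^sub>R x j)" using i by simp
qed

lemma sum_pow2: "(\<Sum>j<k. (2::real)^j) = 2^k - 1"
  by (induction k) auto

lemma sum_half: "(\<Sum>j<k. 1 / (2::real)^(Suc j)) \<le> 1"
proof -
  have "(\<Sum>j<k. 1 / (2::real)^(Suc j)) = 1 - 1/2^k"
    by (induction k) (auto simp: field_simps)
  then show ?thesis by simp
qed



lemma step_lemma:
  fixes S :: "'a::real_normed_vector \<Rightarrow>\<^sub>L 'b::real_normed_vector"
  assumes SS: "strictly_singular S" and Y: "inf_subspace Y" and \<theta>: "\<theta> > 0"
   and H: "\<forall>j<k. x j \<in> Y \<and> norm (x j) = 1 \<and> linear (\<psi> j) \<and> (\<forall>u. \<bar>\<psi> j u\<bar> \<le> 2^j * norm u)"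
   and bi: "\<forall>i<k. \<forall>j<k. \<psi> j (x i) = (if i = j then 1 else 0)"
  shows "\<exists>x' \<psi>'. x' \<in> Y \<and> norm x' = 1 \<and> norm (blinfun_apply S x') \<le> \<theta> \<and> linear \<psi>' \<and>
     (\<forall>u. \<bar>\<psi>' u\<bar> \<le> 2^k * norm u) \<and> \<psi>' x' = 1 \<and> (\<forall>j<k. \<psi>' (x j) = 0 \<and> \<psi> j x' = 0)"
proof -
  define Y' where "Y' = Y \<inter> {u. \<forall>j<k. \<psi> j u = 0}"
  have Y': "inf_subspace Y'" unfolding Y'_def
    using inf_subspace_kernels[OF Y, of k \<psi> "\<lambda>j. 2^j"] H by blast
  have sY': "subspace Y'" using Y' unfolding inf_subspace_def by blast
  have niso: "\<not> iso_onto_image S Y'" using SS Y' unfolding strictly_singular_def by blast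
  obtain y where y: "y \<in> Y'" "y \<noteq> 0" "norm (blinfun_apply S y) \<le> \<theta> * norm y"
  proof (cases "inj_on (blinfun_apply S) Y'")
    case False
    then obtain a b where ab: "a \<in> Y'" "b \<in> Y'" "a \<noteq> b" "blinfun_apply S a = blinfun_apply S b"
      unfolding inj_on_def by blast
    have "a - b \<in> Y'" using sY' ab by (simp add: subspace_diff)
    moreover have "blinfun_apply S (a - b) = 0" using ab by (simp add: blinfun.diff_right)
    moreover have "a - b \<noteq> 0" using ab(3) by simp
    ultimately show ?thesis using that \<theta> by simp
  next
    case True
    with niso have "\<not> (\<exists>K. \<forall>y\<in>Y'. norm y \<le> K * norm (blinfun_apply S y))"
      unfolding iso_onto_image_def by blast
    then obtain y where yy: "y \<in> Y'" "\<not> norm y \<le> (1/\<theta>) * norm (blinfun_apply S y)" by blast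
    have "norm (blinfun_apply S y) < \<theta> * norm y" using yy(2) \<theta> by (simp add: field_simps)
    moreover have "y \<noteq> 0" using yy(2) by auto
    ultimately show ?thesis using that yy(1) by force
  qed
  define x' where "x' = (1 / norm y) *\<^sub>R y"
  have x'Y: "x' \<in> Y'" using sY' y unfolding x'_def by (simp add: subspace_scale)
  have nx': "norm x' = 1" using y unfolding x'_def by simp
  have Sx': "norm (blinfun_apply S x') \<le> \<theta>"
  proof -
    have "norm (blinfun_apply S x') = norm (blinfun_apply S y) / norm y"
      unfolding x'_def by (simp add: blinfun.scaleR_right)
    also have "\<dots> \<le> \<theta>" using y by (simp add: divide_le_eq)
    finally show ?thesis .
  qed
  have \<psi>x': "\<psi> j x' = 0" if "j < k" for j using x'Y that unfolding Y'_def by blast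
  define V where "V = span (x ` {..<k})"
  have sV: "subspace V" unfolding V_def by simp
  have lin: "\<forall>j<k. linear (\<psi> j)" using H by blast
  have dist: "\<forall>v\<in>V. 1/2^k \<le> norm (x' - v)"
  proof
    fix v assume v: "v \<in> V"
    have rep: "v = (\<Sum>j<k. \<psi> j v *\<^sub>R x j)" using rep_span[OF lin bi] v unfolding V_def by blast
    have c: "\<bar>\<psi> j v\<bar> \<le> 2^j * norm (x' - v)" if "j < k" for j
    proof -
      have "\<psi> j v = - \<psi> j (x' - v)" using lin that \<psi>x'[OF that] by (simp add: linear_diff)
      then show ?thesis using H that by (metis abs_minus_cancel)
    qed
    have "norm v \<le> (\<Sum>j<k. norm (\<psi> j v *\<^sub>R x j))" by (subst rep) (rule norm_sum)
    also have "\<dots> = (\<Sum>j<k. \<bar>\<psi> j v\<bar>)" using H by (intro sum.cong) auto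
    also have "\<dots> \<le> (\<Sum>j<k. 2^j * norm (x' - v))" using c by (intro sum_mono) auto
    also have "\<dots> = (2^k - 1) * norm (x' - v)" by (simp add: sum_distrib_right[symmetric] sum_pow2)
    finally have nv: "norm v \<le> (2^k - 1) * norm (x' - v)" .
    have "1 \<le> norm (x' - v) + norm v" using nx' norm_triangle_ineq[of "x' - v" v] by simp
    with nv have "1 \<le> 2^k * norm (x' - v)" by (simp add: algebra_simps)
    then show "1/2^k \<le> norm (x' - v)" by (simp add: field_simps)
  qed
  obtain f where f: "linear f" "\<forall>u. \<bar>f u\<bar> \<le> (1/(1/2^k)) * norm u" "f x' = 1" "\<forall>v\<in>V. f v = 0"
    using hb_dist[OF sV _ dist] by auto
  have "\<forall>j<k. f (x j) = 0" using f(4) unfolding V_def by (simp add: span_base)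
  moreover have "x' \<in> Y" using x'Y unfolding Y'_def by blast
  ultimately show ?thesis using f nx' Sx' \<psi>x' by (intro exI[of _ x'] exI[of _ f]) auto
qed

lemma dep_choice_list:
  assumes P0: "P []" and step: "\<And>l. P l \<Longrightarrow> \<exists>p. P (l @ [p])"
  shows "\<exists>f. \<forall>n. P (map f [0..<n])"
proof -
  define st where "st l = l @ [SOME p. P (l @ [p])]" for l
  define L where "L n = (st ^^ n) []" for n
  have LS: "L (Suc n) = L n @ [SOME p. P (L n @ [p])]" for n unfolding L_def st_def by simp
  have PL: "P (L n)" for n
  proof (induction n)
    case 0 then show ?case using P0 by (simp add: L_def)
  next
    case (Suc n) then show ?case unfolding LS by (metis step someI_ex)
  qed
  have len: "length (L n) = n" for n by (induction n) (auto simp: L_def st_def)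
  define f where "f j = L (Suc j) ! j" for j
  have "map f [0..<n] = L n" for n
  proof (induction n)
    case 0 then show ?case by (simp add: L_def)
  next
    case (Suc n)
    have "f n = (SOME p. P (L n @ [p]))" unfolding f_def LS using len[of n] by (simp add: nth_append)
    then show ?case using Suc by (simp add: LS)
  qed
  then show ?thesis using PL by metis
qed



lemma subspace_closure':
  fixes S :: "'a::real_normed_vector set"
  assumes "subspace S" shows "subspace (closure S)"
  unfolding subspace_def
proof (intro conjI ballI allI)
  show "0 \<in> closure S" using assms closure_subset[of S] subspace_0[OF assms] by blast
next
  fix a b assume "a \<in> closure S" "b \<in> closure S"
  then obtain s t where st: "\<forall>n. s n \<in> S" "s \<longlonglongrightarrow> a" "\<forall>n. t n \<in> S" "t \<longlonglongrightarrow> b"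
    unfolding closure_sequential by blast
  have "\<forall>n. s n + t n \<in> S" using st assms by (simp add: subspace_add)
  moreover have "(\<lambda>n. s n + t n) \<longlonglongrightarrow> a + b" using st by (intro tendsto_add) auto
  ultimately show "a + b \<in> closure S" unfolding closure_sequential by (intro exI[of _ "\<lambda>n. s n + t n"]) auto
next
  fix c a assume "a \<in> closure S"
  then obtain s where st: "\<forall>n. s n \<in> S" "s \<longlonglongrightarrow> a"
    unfolding closure_sequential by blast
  have "\<forall>n. c *\<^sub>R s n \<in> S" using st assms by (simp add: subspace_scale)
  moreover have "(\<lambda>n. c *\<^sub>R s n) \<longlonglongrightarrow> c *\<^sub>R a" using st by (intro tendsto_scaleR) auto
  ultimately show "c *\<^sub>R a \<in> closure S" unfolding closure_sequential by (intro exI[of _ "\<lambda>n. c *\<^sub>R s n"]) auto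
qed

lemma closed_small_set:
  fixes S :: "'a::real_normed_vector \<Rightarrow>\<^sub>L 'b::real_normed_vector"
  shows "closed {z. norm (blinfun_apply S z) \<le> \<delta> * norm z}"
  by (intro closed_Collect_le continuous_intros)



lemma ss_small:
  fixes S :: "'a::real_normed_vector \<Rightarrow>\<^sub>L 'b::real_normed_vector"
  assumes SS: "strictly_singular S" and Y: "inf_subspace Y" and \<delta>: "\<delta> > 0"
  shows "\<exists>Z. inf_subspace Z \<and> Z \<subseteq> Y \<and> (\<forall>z\<in>Z. norm (blinfun_apply S z) \<le> \<delta> * norm z)"
proof -
  define \<theta> :: "nat \<Rightarrow> real" where "\<theta> j = \<delta> / (2^j * 2^(Suc j))" for j
  have \<theta>pos: "\<theta> j > 0" for j using \<delta> unfolding \<theta>_def by simp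
  define P where "P l = (\<forall>j<length l. fst (l!j) \<in> Y \<and> norm (fst (l!j)) = 1 \<and>
      norm (blinfun_apply S (fst (l!j))) \<le> \<theta> j \<and> linear (snd (l!j)) \<and>
      (\<forall>u. \<bar>snd (l!j) u\<bar> \<le> 2^j * norm u) \<and>
      (\<forall>i<length l. snd (l!j) (fst (l!i)) = (if i = j then 1 else 0)))" for l :: "('a \<times> ('a \<Rightarrow> real)) list"
  have "\<exists>p. P (l @ [p])" if Pl: "P l" for l
  proof -
    define k where "k = length l"
    define x where "x j = fst (l!j)" for j
    define \<psi> where "\<psi> j = snd (l!j)" for j
    have H: "\<forall>j<k. x j \<in> Y \<and> norm (x j) = 1 \<and> linear (\<psi> j) \<and> (\<forall>u. \<bar>\<psi> j u\<bar> \<le> 2^j * norm u)"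
      using Pl unfolding P_def k_def x_def \<psi>_def by blast
    have bi: "\<forall>i<k. \<forall>j<k. \<psi> j (x i) = (if i = j then 1 else 0)"
      using Pl unfolding P_def k_def x_def \<psi>_def by blast
    obtain x' \<psi>' where n: "x' \<in> Y" "norm x' = 1" "norm (blinfun_apply S x') \<le> \<theta> k" "linear \<psi>'"
      "\<forall>u. \<bar>\<psi>' u\<bar> \<le> 2^k * norm u" "\<psi>' x' = 1" "\<forall>j<k. \<psi>' (x j) = 0 \<and> \<psi> j x' = 0"
      using step_lemma[OF SS Y \<theta>pos H bi] by blast
    have "P (l @ [(x', \<psi>')])"
      unfolding P_def
    proof (intro allI impI)
      fix j assume j: "j < length (l @ [(x', \<psi>')])"
      show "fst ((l @ [(x', \<psi>')])!j) \<in> Y \<and> norm (fst ((l @ [(x', \<psi>')])!j)) = 1 \<and>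
        norm (blinfun_apply S (fst ((l @ [(x', \<psi>')])!j))) \<le> \<theta> j \<and> linear (snd ((l @ [(x', \<psi>')])!j)) \<and>
        (\<forall>u. \<bar>snd ((l @ [(x', \<psi>')])!j) u\<bar> \<le> 2^j * norm u) \<and>
        (\<forall>i<length (l @ [(x', \<psi>')]). snd ((l @ [(x', \<psi>')])!j) (fst ((l @ [(x', \<psi>')])!i)) = (if i = j then 1 else 0))"
      proof (cases "j < k")
        case True
        have e: "(l @ [(x', \<psi>')])!j = l!j" using True k_def by (simp add: nth_append)
        have bi2: "snd (l!j) (fst ((l @ [(x', \<psi>')])!i)) = (if i = j then 1 else 0)"
          if "i < length (l @ [(x', \<psi>')])" for i
        proof (cases "i < k")
          case True then show ?thesis using bi \<open>j<k\<close> k_def unfolding x_def \<psi>_def by (simp add: nth_append)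
        next
          case False then have "i = k" using that k_def by simp
          then show ?thesis using n(7) \<open>j<k\<close> k_def unfolding \<psi>_def by (simp add: nth_append)
        qed
        have A: "fst (l!j) \<in> Y \<and> norm (fst (l!j)) = 1 \<and>
      norm (blinfun_apply S (fst (l!j))) \<le> \<theta> j \<and> linear (snd (l!j)) \<and>
      (\<forall>u. \<bar>snd (l!j) u\<bar> \<le> 2^j * norm u)"
          using Pl[unfolded P_def, rule_format, OF True[unfolded k_def]] by blast
        show ?thesis unfolding e using A bi2 by blast
      next
        case False then have jk: "j = k" using j k_def by simp
        have e: "(l @ [(x', \<psi>')])!j = (x', \<psi>')" using jk k_def by simp
        have bi2: "\<psi>' (fst ((l @ [(x', \<psi>')])!i)) = (if i = j then 1 else 0)"
          if "i < length (l @ [(x', \<psi>')])" for i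
        proof (cases "i < k")
          case True then show ?thesis using n(7) jk k_def unfolding x_def by (simp add: nth_append)
        next
          case False then have "i = k" using that k_def by simp
          then show ?thesis using n(6) jk k_def by (simp add: nth_append)
        qed
        show ?thesis unfolding e using n jk bi2 by simp
      qed
    qed
    then show ?thesis by blast
  qed
  moreover have "P []" unfolding P_def by simp
  ultimately obtain f where f: "\<forall>n. P (map f [0..<n])" using dep_choice_list[of P] by blast
  define x where "x j = fst (f j)" for j
  define \<psi> where "\<psi> j = snd (f j)" for j
  have mapn: "map f [0..<n] ! j = f j" if "j < n" for n j using that by simp
  have props: "x j \<in> Y \<and> norm (x j) = 1 \<and> norm (blinfun_apply S (x j)) \<le> \<theta> j \<and> linear (\<psi> j) \<and>
      (\<forall>u. \<bar>\<psi> j u\<bar> \<le> 2^j * norm u)" for j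
  proof -
    have jl: "j < length (map f [0..<Suc j])" by simp
    note q = f[rule_format, of "Suc j", unfolded P_def, rule_format, OF jl]
    have "map f [0..<Suc j] ! j = f j" by (rule mapn) simp
    then show ?thesis using q unfolding x_def \<psi>_def by simp
  qed
  have bi: "\<psi> j (x i) = (if i = j then 1 else 0)" for i j
  proof -
    define n where "n = Suc (max i j)"
    have jl: "j < length (map f [0..<n])" "i < length (map f [0..<n])" unfolding n_def by auto
    note q = f[rule_format, of n, unfolded P_def, rule_format, OF jl(1)]
    have "map f [0..<n] ! j = f j" "map f [0..<n] ! i = f i" using jl by (auto intro: mapn)
    then show ?thesis using conjunct2[OF conjunct2[OF conjunct2[OF conjunct2[OF conjunct2[OF q]]]], rule_format, OF jl(2)]
      unfolding x_def \<psi>_def by simp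
  qed
  define Z where "Z = closure (span (range x))"
  have sY: "subspace Y" "closed Y" using Y unfolding inf_subspace_def by auto
  have rY: "range x \<subseteq> Y" using props by blast
  have spY: "span (range x) \<subseteq> Y" by (rule span_minimal[OF rY sY(1)])
  have ZY: "Z \<subseteq> Y" unfolding Z_def by (rule closure_minimal[OF spY sY(2)])
  have lin: "linear (\<psi> j)" for j using props by blast
  have subZ: "subspace Z" unfolding Z_def by (intro subspace_closure') simp
  have clZ: "closed Z" unfolding Z_def by simp
  have ind: "independent (range x)"
    unfolding dependent_def
  proof
    assume "\<exists>a\<in>range x. a \<in> span (range x - {a})"
    then obtain i where i: "x i \<in> span (range x - {x i})" by blast
    have "\<psi> i (x i) = 0"
    proof (rule span_induct[OF i, of "\<lambda>u. \<psi> i u = 0"])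
      show "subspace {u. \<psi> i u = 0}" by (rule linear_subspace_kernel[OF lin])
    next
      fix u assume "u \<in> range x - {x i}"
      then obtain j where "u = x j" "j \<noteq> i" by auto
      then show "\<psi> i u = 0" using bi by simp
    qed
    then show False using bi by simp
  qed
  have infZ: "inf_dim Z"
    unfolding inf_dim_def
  proof
    assume "\<exists>B. finite B \<and> Z \<subseteq> span B"
    then obtain B where B: "finite B" "Z \<subseteq> span B" by blast
    have "range x \<subseteq> Z" unfolding Z_def
      using closure_subset[of "span (range x)"] span_superset[of "range x"] by (rule order_trans[rotated])
    hence "finite (range x)" using independent_span_bound[OF B(1) ind] B by blast
    moreover have "inj x"
    proof (rule injI)
      fix i j assume "x i = x j"
      hence "\<psi> i (x i) = \<psi> i (x j)" by simp
      then show "i = j" using bi by (simp split: if_splits)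
    qed
    ultimately have "finite (UNIV :: nat set)" by (rule finite_imageD)
    then show False by simp
  qed
  have fin: "\<exists>N. z \<in> span (x ` {..<N})" if "z \<in> span (range x)" for z
  proof (rule span_induct[OF that, of "\<lambda>z. \<exists>N. z \<in> span (x ` {..<N})"])
    show "subspace {z. \<exists>N. z \<in> span (x ` {..<N})}" unfolding subspace_def
    proof (intro conjI ballI allI)
      show "0 \<in> {z. \<exists>N. z \<in> span (x ` {..<N})}" by (auto intro: span_0)
    next
      fix a b assume "a \<in> {z. \<exists>N. z \<in> span (x ` {..<N})}" "b \<in> {z. \<exists>N. z \<in> span (x ` {..<N})}"
      then obtain N1 N2 where "a \<in> span (x ` {..<N1})" "b \<in> span (x ` {..<N2})" by auto
      moreover have "span (x ` {..<N1}) \<subseteq> span (x ` {..<max N1 N2})"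
        by (intro span_mono image_mono) auto
      moreover have "span (x ` {..<N2}) \<subseteq> span (x ` {..<max N1 N2})"
        by (intro span_mono image_mono) auto
      ultimately have "a + b \<in> span (x ` {..<max N1 N2})" by (meson span_add subsetD)
      then show "a + b \<in> {z. \<exists>N. z \<in> span (x ` {..<N})}" by blast
    next
      fix c a assume "a \<in> {z. \<exists>N. z \<in> span (x ` {..<N})}"
      then obtain N where "a \<in> span (x ` {..<N})" by auto
      then have "c *\<^sub>R a \<in> span (x ` {..<N})" by (rule span_scale)
      then show "c *\<^sub>R a \<in> {z. \<exists>N. z \<in> span (x ` {..<N})}" by blast
    qed
  next
    fix u assume "u \<in> range x"
    then obtain j where "u = x j" by auto
    then have "u \<in> span (x ` {..<Suc j})" by (intro span_base) auto
    then show "\<exists>N. u \<in> span (x ` {..<N})" by blast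
  qed
  have bnd: "norm (blinfun_apply S z) \<le> \<delta> * norm z" if zs: "z \<in> span (range x)" for z
  proof -
    obtain N where N: "z \<in> span (x ` {..<N})" using fin[OF zs] by blast
    have rep: "z = (\<Sum>j<N. \<psi> j z *\<^sub>R x j)"
      using rep_span[of N \<psi> x z] props bi N by blast
    have "blinfun_apply S z = (\<Sum>j<N. \<psi> j z *\<^sub>R blinfun_apply S (x j))"
      by (subst rep) (simp add: blinfun.sum_right blinfun.scaleR_right)
    hence "norm (blinfun_apply S z) \<le> (\<Sum>j<N. norm (\<psi> j z *\<^sub>R blinfun_apply S (x j)))"
      using norm_sum by metis
    also have "\<dots> = (\<Sum>j<N. \<bar>\<psi> j z\<bar> * norm (blinfun_apply S (x j)))" by simp
    also have "\<dots> \<le> (\<Sum>j<N. (2^j * norm z) * \<theta> j)"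
      using props by (intro sum_mono mult_mono) auto
    also have "\<dots> = (\<delta> * norm z) * (\<Sum>j<N. 1 / 2^(Suc j))"
      unfolding \<theta>_def sum_distrib_left by (intro sum.cong) (auto simp: field_simps)
    also have "\<dots> \<le> (\<delta> * norm z) * 1"
      using \<delta> sum_half[of N] by (intro mult_left_mono) auto
    finally show ?thesis by simp
  qed
  have "\<forall>z\<in>Z. norm (blinfun_apply S z) \<le> \<delta> * norm z"
  proof -
    have "Z \<subseteq> {z. norm (blinfun_apply S z) \<le> \<delta> * norm z}"
      unfolding Z_def using bnd closed_small_set by (intro closure_minimal) auto
    then show ?thesis by blast
  qed
  then show ?thesis using ZY subZ clZ infZ unfolding inf_subspace_def by blast
qed



lemma multi_small:
  fixes s :: "('a::real_normed_vector \<Rightarrow>\<^sub>L 'a) \<Rightarrow> ('a \<Rightarrow>\<^sub>L 'a)"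
  assumes ss: "\<forall>T. strictly_singular (s T)" and \<delta>: "\<delta> > 0" and F: "finite F"
  shows "\<forall>Y. inf_subspace Y \<longrightarrow> (\<exists>Z. inf_subspace Z \<and> Z \<subseteq> Y \<and>
           (\<forall>T\<in>F. \<forall>z\<in>Z. norm (blinfun_apply (s T) z) \<le> \<delta> * norm z))"
  using F
proof (induction F rule: finite_induct)
  case empty then show ?case by blast
next
  case (insert T F)
  show ?case
  proof (intro allI impI)
    fix Y :: "'a set" assume Y: "inf_subspace Y"
    obtain Z1 where Z1: "inf_subspace Z1" "Z1 \<subseteq> Y" "\<forall>T\<in>F. \<forall>z\<in>Z1. norm (blinfun_apply (s T) z) \<le> \<delta> * norm z"
      using insert.IH Y by blast
    obtain Z2 where Z2: "inf_subspace Z2" "Z2 \<subseteq> Z1" "\<forall>z\<in>Z2. norm (blinfun_apply (s T) z) \<le> \<delta> * norm z"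
      using ss_small[OF ss[rule_format, of T] Z1(1) \<delta>] by blast
    show "\<exists>Z. inf_subspace Z \<and> Z \<subseteq> Y \<and> (\<forall>T\<in>insert T F. \<forall>z\<in>Z. norm (blinfun_apply (s T) z) \<le> \<delta> * norm z)"
      using Z1 Z2 by (intro exI[of _ Z2]) blast
  qed
qed

theorem theorem5p8:
  assumes "\<forall>A :: 'a::banach \<Rightarrow>\<^sub>L 'a. \<exists>(c::real) S.
             A = c *\<^sub>R id_blinfun + S \<and> strictly_singular S"
  shows "UALS_saturated TYPE('a)"
proof -
  obtain c s where cs: "\<And>T :: 'a \<Rightarrow>\<^sub>L 'a. T = c T *\<^sub>R id_blinfun + s T \<and> strictly_singular (s T)"
    using assms by metis
  have ap: "blinfun_apply T u = c T *\<^sub>R u + blinfun_apply (s T) u" for T u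
  proof -
    have "blinfun_apply T u = blinfun_apply (c T *\<^sub>R id_blinfun + s T) u"
      using cs[of T] by (rule conjE) (rule arg_cong[where f="\<lambda>T'. blinfun_apply T' u"])
    also have "\<dots> = c T *\<^sub>R u + blinfun_apply (s T) u" by (simp add: blinfun.add_left blinfun.scaleR_left)
    finally show ?thesis .
  qed
  have ss: "\<forall>T. strictly_singular (s T)" using cs by blast
  show ?thesis unfolding UALS_saturated_def
  proof (intro exI[of _ "2::real"] conjI allI impI)
    fix W :: "('a \<Rightarrow>\<^sub>L 'a) set" and A :: "'a \<Rightarrow>\<^sub>L 'a" and \<epsilon> :: real and Y :: "'a set"
    assume h: "convex W \<and> compact W \<and> \<epsilon> > 0 \<and>
       (\<forall>x::'a. norm x \<le> 1 \<longrightarrow> (\<exists>B\<in>W. norm (blinfun_apply (A - B) x) \<le> \<epsilon>))"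
      and Y: "inf_subspace Y"
    have cW: "compact W" and \<epsilon>: "\<epsilon> > 0"
      and H: "\<forall>x::'a. norm x \<le> 1 \<longrightarrow> (\<exists>B\<in>W. norm (blinfun_apply (A - B) x) \<le> \<epsilon>)" using h by auto
    define \<delta> where "\<delta> = \<epsilon> / 5"
    have \<delta>: "\<delta> > 0" using \<epsilon> unfolding \<delta>_def by simp
    have "W \<subseteq> (\<Union>B\<in>W. ball B \<delta>)" using \<delta> by auto
    then obtain N where N: "N \<subseteq> W" "finite N" "W \<subseteq> (\<Union>B\<in>N. ball B \<delta>)"
      using compactE_image[OF cW, of W "\<lambda>B. ball B \<delta>"] by auto
    obtain Z where Z: "inf_subspace Z" "Z \<subseteq> Y"
        "\<forall>T\<in>insert A N. \<forall>z\<in>Z. norm (blinfun_apply (s T) z) \<le> \<delta> * norm z"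
      using multi_small[OF ss \<delta>, of "insert A N"] N(2) Y by blast
    have "\<not> Z \<subseteq> span {}" using Z(1) unfolding inf_subspace_def inf_dim_def by blast
    then obtain y where y: "y \<in> Z" "y \<noteq> 0" by auto
    define x0 where "x0 = (1 / norm y) *\<^sub>R y"
    have x0Z: "x0 \<in> Z" using Z(1) y unfolding x0_def inf_subspace_def by (simp add: subspace_scale)
    have nx0: "norm x0 = 1" using y unfolding x0_def by simp
    obtain B where B: "B \<in> W" "norm (blinfun_apply (A - B) x0) \<le> \<epsilon>" using H[rule_format, of x0] nx0 by auto
    obtain Bi where Bi: "Bi \<in> N" "dist Bi B < \<delta>" using N(3) B(1) by auto
    have BiW: "Bi \<in> W" using Bi N by auto
    have "norm (blinfun_apply (B - Bi) x0) \<le> norm (B - Bi) * norm x0" by (rule norm_blinfun)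
    also have "\<dots> < \<delta>" using Bi(2) nx0 by (simp add: dist_norm norm_minus_commute)
    finally have d1: "norm (blinfun_apply (B - Bi) x0) < \<delta>" .
    have "blinfun_apply (A - Bi) x0 = blinfun_apply (A - B) x0 + blinfun_apply (B - Bi) x0"
      by (simp add: blinfun.diff_left)
    hence "norm (blinfun_apply (A - Bi) x0) \<le> norm (blinfun_apply (A - B) x0) + norm (blinfun_apply (B - Bi) x0)"
      by (metis norm_triangle_ineq)
    hence e1: "norm (blinfun_apply (A - Bi) x0) \<le> \<epsilon> + \<delta>" using B(2) d1 by linarith
    have dec: "blinfun_apply (A - Bi) u = (c A - c Bi) *\<^sub>R u + (blinfun_apply (s A) u - blinfun_apply (s Bi) u)" for u
      by (simp add: blinfun.diff_left ap[of A u] ap[of Bi u] algebra_simps scaleR_diff_left)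
    have sA: "norm (blinfun_apply (s A) z) \<le> \<delta> * norm z" and sB: "norm (blinfun_apply (s Bi) z) \<le> \<delta> * norm z"
      if "z \<in> Z" for z using Z(3) that Bi(1) by auto
    have "\<bar>c A - c Bi\<bar> = norm ((c A - c Bi) *\<^sub>R x0)" using nx0 by simp
    also have "(c A - c Bi) *\<^sub>R x0 = blinfun_apply (A - Bi) x0 - blinfun_apply (s A) x0 + blinfun_apply (s Bi) x0"
      using dec[of x0] by (simp add: algebra_simps)
    also have "norm \<dots> \<le> norm (blinfun_apply (A - Bi) x0) + norm (blinfun_apply (s A) x0) + norm (blinfun_apply (s Bi) x0)"
      using norm_triangle_ineq[of "blinfun_apply (A - Bi) x0 - blinfun_apply (s A) x0" "blinfun_apply (s Bi) x0"]
        norm_triangle_ineq4[of "blinfun_apply (A - Bi) x0" "blinfun_apply (s A) x0"] by linarith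
    also have "\<dots> \<le> \<epsilon> + \<delta> + \<delta> + \<delta>" using e1 sA[OF x0Z] sB[OF x0Z] nx0 by simp
    finally have cb: "\<bar>c A - c Bi\<bar> \<le> \<epsilon> + 3 * \<delta>" by simp
    have "\<forall>z\<in>Z. norm (blinfun_apply (A - Bi) z) \<le> 2 * \<epsilon> * norm z"
    proof
      fix z assume z: "z \<in> Z"
      have "norm (blinfun_apply (A - Bi) z) \<le> norm ((c A - c Bi) *\<^sub>R z) + norm (blinfun_apply (s A) z - blinfun_apply (s Bi) z)"
        unfolding dec by (rule norm_triangle_ineq)
      also have "\<dots> \<le> \<bar>c A - c Bi\<bar> * norm z + (norm (blinfun_apply (s A) z) + norm (blinfun_apply (s Bi) z))"
        by (simp add: norm_triangle_ineq4)
      also have "\<dots> \<le> (\<epsilon> + 3 * \<delta>) * norm z + (\<delta> * norm z + \<delta> * norm z)"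
        using cb sA[OF z] sB[OF z] by (intro add_mono mult_right_mono) auto
      also have "\<dots> = 2 * \<epsilon> * norm z" unfolding \<delta>_def by (simp add: algebra_simps)
      finally show "norm (blinfun_apply (A - Bi) z) \<le> 2 * \<epsilon> * norm z" .
    qed
    then show "\<exists>Z B. inf_subspace Z \<and> Z \<subseteq> Y \<and> B \<in> W \<and> (\<forall>z\<in>Z. norm (blinfun_apply (A - B) z) \<le> 2 * \<epsilon> * norm z)"
      using Z BiW by blast
  next
    show "(0::real) < 2" by simp
  qed
qed


end
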